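(* Let $n\geq2$ and let $S=(n,\phi,F)$ be a semicoherent system whose lifetime distribution has no ties. (i) If $q_i(A)>0$ for every $i\in[n]$ and every $A\subseteq[n]\setminus\{i\}$, then $H(\mathbf{I}_{\mathrm{BP}})=0$ if and only if there is $j\in[n]$ with $\phi(\mathbf{x})=x_j$ for all $\mathbf{x}$. (ii) If $q(A)>0$ for every $A\subseteq[n]$, then $H(\mathbf{p})=0$ if and only if there is $k\in[n]$ with $\phi(\mathbf{x})=x_{k:n}$ for all $\mathbf{x}$ (the $k$th smallest coordinate of $\mathbf{x}$, i.e., a $k$-out-of-$n$ system).
   Context: Semicoherent system $S=(n,\phi,F)$: $\phi:\{0,1\}^n\to\{0,1\}$ nondecreasing with $\phi(0,\ldots,0)=0$, $\phi(1,\ldots,1)=1$ (Boolean vectors identified with subsets of $[n]$); $F$ is the joint c.d.f. of nonnegative lifetimes $X_1,\ldots,X_n$ with $\Pr(X_i=X_k)=0$ for $i\neq k$. System lifetime $T=\inf\{t\geq0:\phi(\{i:X_i>t\})=0\}$. $\mathbf{I}_{\mathrm{BP}}=(I_{\mathrm{BP}}^{(1)},\ldots,I_{\mathrm{BP}}^{(n)})$ with $I_{\mathrm{BP}}^{(j)}=\Pr(T=X_j)$; signature $\mathbf{p}=(p_1,\ldots,p_n)$ with $p_k=\Pr(T=X_{k:n})$, $X_{k:n}$ the $k$th smallest lifetime. $q_j(A)=\Pr\big(\max_{i\notin A\cup\{j\}}X_i<X_j<\min_{i\in A}X_i\big)$ for $A\subseteq[n]\setminus\{j\}$; $q(A)=\Pr\big(\max_{i\notin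 A}X_i<\min_{i\in A}X_i\big)$ (empty max $=-\infty$, empty min $=+\infty$). For a probability vector $\mathbf{w}$ on $[n]$, $H(\mathbf{w})=-\frac{1}{\ln n}\sum_{i=1}^n w_i\ln w_i$ with $0\ln0=0$. *)

theory Defs
  imports "HOL-Probability.Probability"
begin

text \<open>Components are indexed by [n] = {1..n}; Boolean vectors are identified
with subsets of {1..n} (the set of coordinates equal to 1).\<close>

definition semicoherent :: "nat \<Rightarrow> (nat set \<Rightarrow> bool) \<Rightarrow> bool" where
  "semicoherent n \<phi> \<longleftrightarrow>
     (\<forall>A B. A \<subseteq> B \<and> B \<subseteq> {1..n} \<and> \<phi> A \<longrightarrow> \<phi> B) \<and> \<not> \<phi> {} \<and> \<phi> {1..n}"

definition ord_stat :: "nat \<Rightarrow> nat \<Rightarrow> (nat \<Rightarrow> real) \<Rightarrow> real" where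
  "ord_stat n k x = sort (map x [1..<n+1]) ! (k - 1)"

definition lifetimes :: "'a measure \<Rightarrow> nat \<Rightarrow> (nat \<Rightarrow> 'a \<Rightarrow> real) \<Rightarrow> bool" where
  "lifetimes M n X \<longleftrightarrow> prob_space M \<and>
     (\<forall>i\<in>{1..n}. X i \<in> borel_measurable M \<and> (\<forall>\<omega>\<in>space M. 0 \<le> X i \<omega>)) \<and>
     (\<forall>i\<in>{1..n}. \<forall>k\<in>{1..n}. i \<noteq> k \<longrightarrow> measure M {\<omega>\<in>space M. X i \<omega> = X k \<omega>} = 0)"

definition sys_lifetime :: "nat \<Rightarrow> (nat set \<Rightarrow> bool) \<Rightarrow> (nat \<Rightarrow> 'a \<Rightarrow> real) \<Rightarrow> 'a \<Rightarrow> real" where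
  "sys_lifetime n \<phi> X \<omega> = Inf {t. 0 \<le> t \<and> \<not> \<phi> {i\<in>{1..n}. X i \<omega> > t}}"

definition I_BP :: "'a measure \<Rightarrow> nat \<Rightarrow> (nat set \<Rightarrow> bool) \<Rightarrow> (nat \<Rightarrow> 'a \<Rightarrow> real) \<Rightarrow> nat \<Rightarrow> real" where
  "I_BP M n \<phi> X j = measure M {\<omega>\<in>space M. sys_lifetime n \<phi> X \<omega> = X j \<omega>}"

definition signature :: "'a measure \<Rightarrow> nat \<Rightarrow> (nat set \<Rightarrow> bool) \<Rightarrow> (nat \<Rightarrow> 'a \<Rightarrow> real) \<Rightarrow> nat \<Rightarrow> real" where
  "signature M n \<phi> X k =
     measure M {\<omega>\<in>space M. sys_lifetime n \<phi> X \<omega> = ord_stat n k (\<lambda>i. X i \<omega>)}"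

text \<open>q_j(A) = Pr(max_{i notin A u {j}} X_i < X_j < min_{i in A} X_i), with
empty max = -inf and empty min = +inf.\<close>
definition q_j :: "'a measure \<Rightarrow> nat \<Rightarrow> (nat \<Rightarrow> 'a \<Rightarrow> real) \<Rightarrow> nat \<Rightarrow> nat set \<Rightarrow> real" where
  "q_j M n X j A = measure M {\<omega>\<in>space M.
      (\<forall>i\<in>{1..n} - (A \<union> {j}). X i \<omega> < X j \<omega>) \<and> (\<forall>i\<in>A. X j \<omega> < X i \<omega>)}"

definition q :: "'a measure \<Rightarrow> nat \<Rightarrow> (nat \<Rightarrow> 'a \<Rightarrow> real) \<Rightarrow> nat set \<Rightarrow> real" where
  "q M n X A = measure M {\<omega>\<in>space M.
      \<forall>i\<in>{1..n} - A. \<forall>l\<in>A. X i \<omega> < X l \<omega>}"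

definition entropy_n :: "nat \<Rightarrow> (nat \<Rightarrow> real) \<Rightarrow> real" where
  "entropy_n n w = - (1 / ln (real n)) * (\<Sum>i\<in>{1..n}. if w i = 0 then 0 else w i * ln (w i))"

end

theory Submission
  imports Defs
begin


lemma entropy_zero_iff:
  assumes "n \<ge> 2" "\<forall>i\<in>{1..n}. 0 \<le> w i \<and> w i \<le> 1"
  shows "entropy_n n w = 0 \<longleftrightarrow> (\<forall>i\<in>{1..n}. w i = 0 \<or> w i = 1)"
proof -
  have ln: "ln (real n) > 0" using assms(1) by simp
  have np: "\<forall>i\<in>{1..n}. (if w i = 0 then 0 else w i * ln (w i)) \<le> 0"
    using assms(2) by (auto intro!: mult_nonneg_nonpos)
  have "entropy_n n w = 0 \<longleftrightarrow> (\<Sum>i\<in>{1..n}. - (if w i = 0 then 0 else w i * ln (w i))) = 0"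
    using ln unfolding entropy_n_def by (simp add: sum_negf)
  also have "\<dots> \<longleftrightarrow> (\<forall>i\<in>{1..n}. - (if w i = 0 then 0 else w i * ln (w i)) = 0)"
    using np by (intro sum_nonneg_eq_0_iff) auto
  also have "\<dots> \<longleftrightarrow> (\<forall>i\<in>{1..n}. w i = 0 \<or> w i = 1)"
  proof (intro ball_cong refl)
    fix i assume i: "i \<in> {1..n}"
    show "(- (if w i = 0 then 0 else w i * ln (w i)) = 0) = (w i = 0 \<or> w i = 1)"
    proof (cases "w i = 0")
      case False
      have "0 \<le> w i" using assms(2) i by blast
      then have "w i > 0" using False by linarith
      then show ?thesis using False by (simp add: ln_eq_zero_iff)
    qed simp
  qed
  finally show ?thesis .
qed

lemma ord_stat_le_iff:
  assumes "1 \<le> k" "k \<le> n"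
  shows "ord_stat n k x \<le> v \<longleftrightarrow> k \<le> card {i\<in>{1..n}. x i \<le> v}"
proof -
  define s where "s = sort (map x [1..<n+1])"
  have len: "length s = n" by (simp add: s_def)
  have srt: "sorted s" by (simp add: s_def)
  have "card {i\<in>{1..n}. x i \<le> v} = card ({i. x i \<le> v} \<inter> set [1..<n+1])"
    by (rule arg_cong[where f=card]) auto
  also have "\<dots> = length (filter (\<lambda>i. x i \<le> v) [1..<n+1])"
    by (rule distinct_length_filter[symmetric]) (simp del: upt_Suc)
  also have "\<dots> = length (filter (\<lambda>y. y \<le> v) (map x [1..<n+1]))"
    by (simp add: filter_map comp_def del: upt_Suc)
  also have "\<dots> = length (filter (\<lambda>y. y \<le> v) s)" by (simp add: s_def filter_sort del: upt_Suc)
  also have "\<dots> = card {i. i < n \<and> s ! i \<le> v}" by (simp add: length_filter_conv_card len)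
  finally have c: "card {i\<in>{1..n}. x i \<le> v} = card {i. i < n \<and> s ! i \<le> v}" .
  have o: "ord_stat n k x = s ! (k - 1)" by (simp add: ord_stat_def s_def)
  show ?thesis
  proof
    assume le: "ord_stat n k x \<le> v"
    have "{..<k} \<subseteq> {i. i < n \<and> s ! i \<le> v}"
    proof
      fix i assume "i \<in> {..<k}"
      then have "i \<le> k - 1" "k - 1 < n" using assms by auto
      then have "s ! i \<le> s ! (k-1)" using sorted_nth_mono[OF srt] len by auto
      then show "i \<in> {i. i < n \<and> s ! i \<le> v}" using le o \<open>i \<in> {..<k}\<close> assms by auto
    qed
    then have "card {..<k} \<le> card {i. i < n \<and> s ! i \<le> v}" by (intro card_mono) auto
    then show "k \<le> card {i\<in>{1..n}. x i \<le> v}" using c by simp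
  next
    assume k: "k \<le> card {i\<in>{1..n}. x i \<le> v}"
    show "ord_stat n k x \<le> v"
    proof (rule ccontr)
      assume "\<not> ord_stat n k x \<le> v"
      then have gt: "s ! (k-1) > v" using o by simp
      have "{i. i < n \<and> s ! i \<le> v} \<subseteq> {..<k-1}"
      proof
        fix i assume i: "i \<in> {i. i < n \<and> s ! i \<le> v}"
        show "i \<in> {..<k-1}"
        proof (rule ccontr)
          assume "i \<notin> {..<k-1}"
          then have "s ! (k-1) \<le> s ! i" using sorted_nth_mono[OF srt] len i by auto
          then show False using gt i by auto
        qed
      qed
      then have "card {i. i < n \<and> s ! i \<le> v} \<le> k - 1" using card_mono[of "{..<k-1}"] by fastforce
      then show False using k c assms by simp
    qed
  qed
qed

lemma ord_stat_distinct:
  assumes "inj_on x {1..n}" "k \<in> {1..n}" "l \<in> {1..n}" "k \<noteq> l"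
  shows "ord_stat n k x \<noteq> ord_stat n l x"
proof -
  define s where "s = sort (map x [1..<n+1])"
  have "distinct (map x [1..<n+1])" using assms(1)
    by (simp add: distinct_map atLeastLessThanSuc_atLeastAtMost del: upt_Suc)
  then have "distinct s" by (simp add: s_def)
  moreover have "length s = n" by (simp add: s_def)
  moreover have "k-1 < n" "l-1 < n" "k-1 \<noteq> l-1" using assms(2-4) by auto
  ultimately show ?thesis using nth_eq_iff_index_eq[of s "k-1" "l-1"]
    unfolding ord_stat_def s_def[symmetric] by auto
qed

lemma ord_stat_in:
  assumes "k \<in> {1..n}"
  shows "ord_stat n k x \<in> x ` {1..n}"
proof -
  define s where "s = sort (map x [1..<n+1])"
  have "length s = n" by (simp add: s_def)
  then have "s ! (k-1) \<in> set s" using assms by (intro nth_mem) auto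
  moreover have "set s = x ` {1..n}" by (simp add: s_def atLeastLessThanSuc_atLeastAtMost del: upt_Suc)
  ultimately show ?thesis unfolding ord_stat_def s_def[symmetric] by simp
qed



lemma sc_mono: "semicoherent n \<phi> \<Longrightarrow> A \<subseteq> B \<Longrightarrow> B \<subseteq> {1..n} \<Longrightarrow> \<phi> A \<Longrightarrow> \<phi> B"
  unfolding semicoherent_def by blast

lemma T_char:
  fixes x :: "nat \<Rightarrow> real"
  assumes sc: "semicoherent n \<phi>" and nn: "\<forall>i\<in>{1..n}. 0 \<le> x i"
  defines "m \<equiv> Max ((\<lambda>P. Min (x ` P)) ` {P. P \<subseteq> {1..n} \<and> \<phi> P})"
  shows "0 \<le> m" and "\<And>t. 0 \<le> t \<Longrightarrow> (\<not> \<phi> {i\<in>{1..n}. t < x i} \<longleftrightarrow> m \<le> t)"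
    and "Inf {t. 0 \<le> t \<and> \<not> \<phi> {i\<in>{1..n}. t < x i}} = m" and "\<exists>j\<in>{1..n}. m = x j"
proof -
  let ?Ps = "{P. P \<subseteq> {1..n} \<and> \<phi> P}"
  have e: "\<not> \<phi> {}" "\<phi> {1..n}" using sc unfolding semicoherent_def by auto
  have fin: "finite ?Ps" by (rule finite_subset[of _ "Pow {1..n}"]) auto
  have ne: "{1..n} \<in> ?Ps" using e by auto
  have Pne: "P \<noteq> {}" if "P \<in> ?Ps" for P using that e by auto
  have finP: "finite P" if "P \<in> ?Ps" for P using that finite_subset by auto
  have "m \<in> (\<lambda>P. Min (x ` P)) ` ?Ps" unfolding m_def using fin ne by (intro Max_in) auto
  then obtain P0 where P0: "P0 \<in> ?Ps" "m = Min (x ` P0)" by blast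
  have ge: "Min (x ` P) \<le> m" if "P \<in> ?Ps" for P
    unfolding m_def using fin that by (intro Max_ge) auto
  have "Min (x ` P0) \<in> x ` P0" using finP[OF P0(1)] Pne[OF P0(1)] by (intro Min_in) auto
  then obtain j where j: "j \<in> P0" "Min (x ` P0) = x j" by auto
  show "\<exists>j\<in>{1..n}. m = x j" using j P0 by auto
  show m0: "0 \<le> m" using P0 j nn by auto
  show ch: "\<not> \<phi> {i\<in>{1..n}. t < x i} \<longleftrightarrow> m \<le> t" if t0: "0 \<le> t" for t
  proof
    assume np: "\<not> \<phi> {i\<in>{1..n}. t < x i}"
    show "m \<le> t"
    proof (rule ccontr)
      assume "\<not> m \<le> t"
      then have "\<forall>i\<in>P0. t < x i"
      proof (intro ballI)
        fix i assume "\<not> m \<le> t" "i \<in> P0"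
        then have "Min (x ` P0) \<le> x i" using finP[OF P0(1)] by (intro Min_le) auto
        then show "t < x i" using \<open>\<not> m \<le> t\<close> P0 by auto
      qed
      then have "P0 \<subseteq> {i\<in>{1..n}. t < x i}" using P0 by auto
      then show False using sc_mono[OF sc _ _ ] np P0 by blast
    qed
  next
    assume mt: "m \<le> t"
    show "\<not> \<phi> {i\<in>{1..n}. t < x i}"
    proof
      assume ph: "\<phi> {i\<in>{1..n}. t < x i}"
      let ?Q = "{i\<in>{1..n}. t < x i}"
      have Q: "?Q \<in> ?Ps" using ph by auto
      have "Min (x ` ?Q) \<in> x ` ?Q" using finP[OF Q] Pne[OF Q] by (intro Min_in) auto
      then obtain l where "l \<in> ?Q" "Min (x ` ?Q) = x l" by auto
      then show False using ge[OF Q] mt by auto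
    qed
  qed
  have "{t. 0 \<le> t \<and> \<not> \<phi> {i\<in>{1..n}. t < x i}} = {m..}"
  proof (rule set_eqI)
    fix t show "t \<in> {t. 0 \<le> t \<and> \<not> \<phi> {i\<in>{1..n}. t < x i}} \<longleftrightarrow> t \<in> {m..}"
    proof (cases "0 \<le> t")
      case True then show ?thesis using ch[OF True] True by simp
    next
      case False then show ?thesis using m0 by simp
    qed
  qed
  then show "Inf {t. 0 \<le> t \<and> \<not> \<phi> {i\<in>{1..n}. t < x i}} = m" by simp
qed



lemma sets_card_set:
  assumes "finite I" "\<And>i. i\<in>I \<Longrightarrow> {\<omega>\<in>space M. Q i \<omega>} \<in> sets M"
  shows "{\<omega>\<in>space M. P {i\<in>I. Q i \<omega>}} \<in> sets M"
proof -
  have "{\<omega>\<in>space M. P {i\<in>I. Q i \<omega>}} =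
     {\<omega>\<in>space M. \<exists>S\<in>Pow I. P S \<and> ((\<forall>i\<in>S. Q i \<omega>) \<and> (\<forall>i\<in>I-S. \<not> Q i \<omega>))}"
  proof (rule Collect_cong, rule conj_cong[OF refl])
    fix \<omega>
    show "P {i\<in>I. Q i \<omega>} = (\<exists>S\<in>Pow I. P S \<and> ((\<forall>i\<in>S. Q i \<omega>) \<and> (\<forall>i\<in>I-S. \<not> Q i \<omega>)))"
    proof
      assume "P {i\<in>I. Q i \<omega>}" then show "\<exists>S\<in>Pow I. P S \<and> ((\<forall>i\<in>S. Q i \<omega>) \<and> (\<forall>i\<in>I-S. \<not> Q i \<omega>))"
        by (intro bexI[of _ "{i\<in>I. Q i \<omega>}"]) auto
    next
      assume "\<exists>S\<in>Pow I. P S \<and> ((\<forall>i\<in>S. Q i \<omega>) \<and> (\<forall>i\<in>I-S. \<not> Q i \<omega>))"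
      then obtain S where S: "S \<subseteq> I" "P S" "\<forall>i\<in>S. Q i \<omega>" "\<forall>i\<in>I-S. \<not> Q i \<omega>" by auto
      then have "{i\<in>I. Q i \<omega>} = S" by auto
      then show "P {i\<in>I. Q i \<omega>}" using S by simp
    qed
  qed
  also have "\<dots> \<in> sets M"
    using assms
    by (intro sets.sets_Collect_finite_Ex sets.sets_Collect_conj sets.sets_Collect_const
        sets.sets_Collect_finite_All sets.sets_Collect_neg) (auto intro: finite_subset)
  finally show ?thesis .
qed

lemma eq_from_le:
  fixes a b :: real
  assumes "0 \<le> a" "0 \<le> b" "\<And>t. 0 \<le> t \<Longrightarrow> (a \<le> t \<longleftrightarrow> b \<le> t)"
  shows "a = b"
  using assms(3)[of a] assms(3)[of b] assms(1,2) by auto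



theorem proposition15:
  fixes M :: "'a measure" and n :: nat and \<phi> :: "nat set \<Rightarrow> bool"
    and X :: "nat \<Rightarrow> 'a \<Rightarrow> real"
  assumes "n \<ge> 2"
    and "semicoherent n \<phi>"
    and "lifetimes M n X"
  shows "((\<forall>i\<in>{1..n}. \<forall>A. A \<subseteq> {1..n} - {i} \<longrightarrow> q_j M n X i A > 0) \<longrightarrow>
          (entropy_n n (I_BP M n \<phi> X) = 0 \<longleftrightarrow>
           (\<exists>j\<in>{1..n}. \<forall>A. A \<subseteq> {1..n} \<longrightarrow> (\<phi> A \<longleftrightarrow> j \<in> A))))
       \<and> ((\<forall>A. A \<subseteq> {1..n} \<longrightarrow> q M n X A > 0) \<longrightarrow>
          (entropy_n n (signature M n \<phi> X) = 0 \<longleftrightarrow>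
           (\<exists>k\<in>{1..n}. \<forall>A. A \<subseteq> {1..n} \<longrightarrow>
              (if \<phi> A then 1 else 0) = ord_stat n k (indicator A))))"
proof -
  note sc = assms(2)
  from assms(3) have ps: "prob_space M"
    and Xm: "\<And>i. i\<in>{1..n} \<Longrightarrow> X i \<in> borel_measurable M"
    and Xnn: "\<And>i \<omega>. i\<in>{1..n} \<Longrightarrow> \<omega> \<in> space M \<Longrightarrow> 0 \<le> X i \<omega>"
    and ties: "\<And>i k. i\<in>{1..n} \<Longrightarrow> k\<in>{1..n} \<Longrightarrow> i \<noteq> k \<Longrightarrow> measure M {\<omega>\<in>space M. X i \<omega> = X k \<omega>} = 0"
    unfolding lifetimes_def by auto
  interpret prob_space M by (rule ps)
  have e: "\<not> \<phi> {}" "\<phi> {1..n}" using sc unfolding semicoherent_def by auto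
  define T where "T = sys_lifetime n \<phi> X"
  define m where "m \<omega> = Max ((\<lambda>P. Min ((\<lambda>i. X i \<omega>) ` P)) ` {P. P \<subseteq> {1..n} \<and> \<phi> P})" for \<omega>
  have nnw: "\<forall>i\<in>{1..n}. 0 \<le> X i \<omega>" if "\<omega> \<in> space M" for \<omega>
    using Xnn that by blast
  have Tm: "T \<omega> = m \<omega>" if "\<omega> \<in> space M" for \<omega>
    unfolding T_def m_def sys_lifetime_def by (rule T_char(3)[OF sc nnw[OF that]])
  have Tc: "\<not> \<phi> {i\<in>{1..n}. t < X i \<omega>} \<longleftrightarrow> T \<omega> \<le> t" if "\<omega> \<in> space M" "0 \<le> t" for \<omega> t
    unfolding Tm[OF that(1)] m_def by (rule T_char(2)[OF sc nnw[OF that(1)] that(2)])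
  have T0: "0 \<le> T \<omega>" if "\<omega> \<in> space M" for \<omega>
    unfolding Tm[OF that(1)] m_def by (rule T_char(1)[OF sc nnw[OF that(1)]])
  have Tj: "\<exists>j\<in>{1..n}. T \<omega> = X j \<omega>" if "\<omega> \<in> space M" for \<omega>
    unfolding Tm[OF that(1)] m_def by (rule T_char(4)[OF sc nnw[OF that(1)]])
  have finPs: "finite {P. P \<subseteq> {1..n} \<and> \<phi> P}" by (rule finite_subset[of _ "Pow {1..n}"]) auto
  have mm: "m \<in> borel_measurable M"
    unfolding m_def
  proof (rule borel_measurable_Max[OF finPs])
    fix P assume "P \<in> {P. P \<subseteq> {1..n} \<and> \<phi> P}"
    then have P: "P \<subseteq> {1..n}" by auto
    then have "finite P" using finite_subset by auto
    then show "(\<lambda>\<omega>. Min ((\<lambda>i. X i \<omega>) ` P)) \<in> borel_measurable M"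
      using P Xm by (intro borel_measurable_Min) auto
  qed
  have Tmeas: "T \<in> borel_measurable M"
    using mm by (rule measurable_cong[THEN iffD1, rotated]) (simp add: Tm)
  have setle: "{\<omega>\<in>space M. X i \<omega> \<le> a} \<in> sets M" if "i \<in> {1..n}" for i a
  proof -
    note [measurable] = Xm[OF that]
    show ?thesis by measurable
  qed
  have Om: "(\<lambda>\<omega>. ord_stat n k (\<lambda>i. X i \<omega>)) \<in> borel_measurable M" if k: "k \<in> {1..n}" for k
    unfolding borel_measurable_iff_le
  proof
    fix a
    have "{\<omega>\<in>space M. ord_stat n k (\<lambda>i. X i \<omega>) \<le> a} = {\<omega>\<in>space M. k \<le> card {i\<in>{1..n}. X i \<omega> \<le> a}}"
      using ord_stat_le_iff[of k n] k by auto
    also have "\<dots> \<in> sets M" using setle by (intro sets_card_set) auto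
    finally show "{\<omega>\<in>space M. ord_stat n k (\<lambda>i. X i \<omega>) \<le> a} \<in> sets M" .
  qed
  define S where "S j = {\<omega>\<in>space M. T \<omega> = X j \<omega>}" for j
  define Ok where "Ok k = {\<omega>\<in>space M. T \<omega> = ord_stat n k (\<lambda>i. X i \<omega>)}" for k
  have Sm: "S j \<in> sets M" if "j \<in> {1..n}" for j
  proof -
    note [measurable] = Xm[OF that] Tmeas
    show ?thesis unfolding S_def by measurable
  qed
  have Omm: "Ok k \<in> sets M" if "k \<in> {1..n}" for k
  proof -
    note [measurable] = Om[OF that] Tmeas
    show ?thesis unfolding Ok_def by measurable
  qed
  have wS: "I_BP M n \<phi> X j = measure M (S j)" for j
    unfolding I_BP_def S_def T_def ..
  have pO: "signature M n \<phi> X k = measure M (Ok k)" for k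
    unfolding signature_def Ok_def T_def ..
  have bnd: "\<forall>i\<in>{1..n}. 0 \<le> measure M (B i) \<and> measure M (B i) \<le> 1" for B :: "nat \<Rightarrow> 'a set"
    by auto
  have one: "\<exists>j\<in>{1..n}. measure M (B j) = 1"
    if Bm: "\<And>j. j\<in>{1..n} \<Longrightarrow> B j \<in> sets M" and cov: "space M \<subseteq> (\<Union>j\<in>{1..n}. B j)"
      and b01: "\<forall>i\<in>{1..n}. measure M (B i) = 0 \<or> measure M (B i) = 1" for B
  proof (rule ccontr)
    assume "\<not> ?thesis"
    then have z: "\<forall>i\<in>{1..n}. measure M (B i) = 0" using b01 by auto
    have "1 = measure M (space M)" by (simp add: prob_space)
    also have "\<dots> \<le> measure M (\<Union>j\<in>{1..n}. B j)"
      using cov Bm by (intro finite_measure_mono) auto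
    also have "\<dots> \<le> (\<Sum>j\<in>{1..n}. measure M (B j))"
      using Bm by (intro finite_measure_subadditive_finite) auto
    also have "\<dots> = 0" using z by simp
    finally show False by simp
  qed
  have cmp0: "measure M (space M - B) = 0" if "B \<in> sets M" "measure M B = 1" for B
    using prob_compl[OF that(1)] that(2) by simp
  have bad: "\<not> measure M E > 0" if "E \<subseteq> space M - B" "B \<in> sets M" "measure M B = 1" for E B
  proof -
    have "measure M E \<le> measure M (space M - B)" using that by (intro finite_measure_mono) auto
    then show ?thesis using cmp0[OF that(2,3)] by simp
  qed
  have wfun: "I_BP M n \<phi> X = (\<lambda>j. measure M (S j))" by (rule ext) (simp add: wS)
  have pfun: "signature M n \<phi> X = (\<lambda>j. measure M (Ok j))" by (rule ext) (simp add: pO)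
  have ent_w: "entropy_n n (I_BP M n \<phi> X) = 0 \<longleftrightarrow> (\<forall>i\<in>{1..n}. measure M (S i) = 0 \<or> measure M (S i) = 1)"
    unfolding wfun by (rule entropy_zero_iff[OF assms(1)]) auto
  have ent_p: "entropy_n n (signature M n \<phi> X) = 0 \<longleftrightarrow> (\<forall>i\<in>{1..n}. measure M (Ok i) = 0 \<or> measure M (Ok i) = 1)"
    unfolding pfun by (rule entropy_zero_iff[OF assms(1)]) auto
  have part1: "entropy_n n (I_BP M n \<phi> X) = 0"
    if "\<exists>j\<in>{1..n}. \<forall>A. A \<subseteq> {1..n} \<longrightarrow> (\<phi> A \<longleftrightarrow> j \<in> A)"
  proof -
    from that have "\<exists>j. j\<in>{1..n} \<and> (\<forall>A. A \<subseteq> {1..n} \<longrightarrow> (\<phi> A \<longleftrightarrow> j \<in> A))" by (simp only: Bex_def)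
    then obtain j where jj: "j\<in>{1..n} \<and> (\<forall>A. A \<subseteq> {1..n} \<longrightarrow> (\<phi> A \<longleftrightarrow> j \<in> A))" ..
    from jj have j: "j\<in>{1..n}" by (rule conjunct1)
    from jj have dj: "\<forall>A. A \<subseteq> {1..n} \<longrightarrow> (\<phi> A \<longleftrightarrow> j \<in> A)" by (rule conjunct2)
    have TX: "T \<omega> = X j \<omega>" if ws: "\<omega>\<in>space M" for \<omega>
    proof (rule eq_from_le[OF T0[OF ws] Xnn[OF j ws]])
      fix t :: real assume t: "0 \<le> t"
      have sub: "{i\<in>{1..n}. t < X i \<omega>} \<subseteq> {1..n}" by auto
      have "\<phi> {i\<in>{1..n}. t < X i \<omega>} \<longleftrightarrow> j \<in> {i\<in>{1..n}. t < X i \<omega>}"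
        using mp[OF spec[OF dj, of "{i\<in>{1..n}. t < X i \<omega>}"] sub] .
      then have "\<not> \<phi> {i\<in>{1..n}. t < X i \<omega>} \<longleftrightarrow> \<not> X j \<omega> > t" using j by simp
      then show "T \<omega> \<le> t \<longleftrightarrow> X j \<omega> \<le> t" using Tc[OF ws t] by auto
    qed
    have "\<forall>i\<in>{1..n}. measure M (S i) = 0 \<or> measure M (S i) = 1"
    proof
      fix i assume i: "i\<in>{1..n}"
      show "measure M (S i) = 0 \<or> measure M (S i) = 1"
      proof (cases "i = j")
        case True
        then have "S i = space M" unfolding S_def using TX by auto
        then show ?thesis by (simp add: prob_space)
      next
        case False
        then have "S i = {\<omega>\<in>space M. X j \<omega> = X i \<omega>}" unfolding S_def using TX by auto
        then show ?thesis using ties[OF j i] False by auto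
      qed
    qed
    then show ?thesis using ent_w by simp
  qed
  have part1': "\<exists>j\<in>{1..n}. \<forall>A. A \<subseteq> {1..n} \<longrightarrow> (\<phi> A \<longleftrightarrow> j \<in> A)"
    if h: "entropy_n n (I_BP M n \<phi> X) = 0"
      and qp: "\<forall>i\<in>{1..n}. \<forall>A. A \<subseteq> {1..n} - {i} \<longrightarrow> q_j M n X i A > 0"
  proof -
    have b01: "\<forall>i\<in>{1..n}. measure M (S i) = 0 \<or> measure M (S i) = 1" using h ent_w by simp
    have cov: "space M \<subseteq> (\<Union>j\<in>{1..n}. S j)" using Tj unfolding S_def by blast
    obtain j where j: "j\<in>{1..n}" "measure M (S j) = 1" using one[OF Sm cov b01] by blast
    have qpj: "\<forall>A. A \<subseteq> {1..n} - {j} \<longrightarrow> q_j M n X j A > 0" using qp j(1) by (rule bspec)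
    have "\<forall>A. A \<subseteq> {1..n} \<longrightarrow> (\<phi> A \<longleftrightarrow> j \<in> A)"
    proof (intro allI impI)
      fix A assume A: "A \<subseteq> {1..n}"
      show "\<phi> A \<longleftrightarrow> j \<in> A"
      proof (rule ccontr)
        assume nq: "\<not> (\<phi> A \<longleftrightarrow> j \<in> A)"
        show False
        proof (cases "\<phi> A")
          case True
          then have jA: "j \<notin> A" using nq by simp
          define E where "E = {\<omega>\<in>space M. (\<forall>i\<in>{1..n} - (A \<union> {j}). X i \<omega> < X j \<omega>) \<and> (\<forall>i\<in>A. X j \<omega> < X i \<omega>)}"
          have "A \<subseteq> {1..n} - {j}" using A jA by auto
          then have "q_j M n X j A > 0" using qpj by blast
          then have pos: "measure M E > 0" unfolding q_j_def E_def by simp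
          have "E \<subseteq> space M - S j"
          proof
            fix \<omega> assume w: "\<omega> \<in> E"
            then have ws: "\<omega> \<in> space M" unfolding E_def by auto
            show "\<omega> \<in> space M - S j"
            proof (rule ccontr)
              assume "\<omega> \<notin> space M - S j"
              then have eq: "T \<omega> = X j \<omega>" using ws unfolding S_def by auto
              have "\<not> \<phi> {i\<in>{1..n}. X j \<omega> < X i \<omega>}" using Tc[OF ws Xnn[OF j(1) ws]] eq by simp
              moreover have "A \<subseteq> {i\<in>{1..n}. X j \<omega> < X i \<omega>}" using w A unfolding E_def by auto
              ultimately show False using sc_mono[OF sc] True by blast
            qed
          qed
          then show False using bad[OF _ Sm[OF j(1)] j(2)] pos by blast
        next
          case False
          then have jA: "j \<in> A" using nq by simp
          have An: "A \<noteq> {1..n}" using False e by auto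
          define E where "E = {\<omega>\<in>space M. (\<forall>i\<in>{1..n} - ((A - {j}) \<union> {j}). X i \<omega> < X j \<omega>) \<and> (\<forall>i\<in>A - {j}. X j \<omega> < X i \<omega>)}"
          have "A - {j} \<subseteq> {1..n} - {j}" using A by auto
          then have "q_j M n X j (A - {j}) > 0" using qpj by blast
          then have pos: "measure M E > 0" unfolding q_j_def E_def by simp
          have "E \<subseteq> space M - S j"
          proof
            fix \<omega> assume w: "\<omega> \<in> E"
            then have ws: "\<omega> \<in> space M" unfolding E_def by auto
            show "\<omega> \<in> space M - S j"
            proof (rule ccontr)
              assume "\<omega> \<notin> space M - S j"
              then have eq: "T \<omega> = X j \<omega>" using ws unfolding S_def by auto
              define R where "R = {1..n} - A"
              have Rne: "R \<noteq> {}" "finite R" using A An unfolding R_def by auto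
              define t where "t = Max ((\<lambda>i. X i \<omega>) ` R)"
              have "t \<in> (\<lambda>i. X i \<omega>) ` R" unfolding t_def using Rne by (intro Max_in) auto
              then obtain r where r: "r \<in> R" "t = X r \<omega>" by auto
              have t0: "0 \<le> t" using r Xnn ws unfolding R_def by auto
              have "X r \<omega> < X j \<omega>" using w r jA unfolding E_def R_def by auto
              then have "\<not> T \<omega> \<le> t" using eq r by simp
              then have ph: "\<phi> {i\<in>{1..n}. t < X i \<omega>}" using Tc[OF ws t0] by simp
              have "{i\<in>{1..n}. t < X i \<omega>} \<subseteq> A"
              proof
                fix i assume i: "i \<in> {i\<in>{1..n}. t < X i \<omega>}"
                show "i \<in> A"
                proof (rule ccontr)
                  assume "i \<notin> A"
                  then have "i \<in> R" using i unfolding R_def by auto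
                  then have "X i \<omega> \<le> t" unfolding t_def using Rne by (intro Max_ge) auto
                  then show False using i by auto
                qed
              qed
              then show False using sc_mono[OF sc _ A ph] False by blast
            qed
          qed
          then show False using bad[OF _ Sm[OF j(1)] j(2)] pos by blast
        qed
      qed
    qed
    then show ?thesis by (rule bexI[OF _ j(1)])
  qed
  have ind_le0: "ord_stat n k (indicator A) \<le> 0 \<longleftrightarrow> k \<le> n - card A"
    if k: "k \<in> {1..n}" and A: "A \<subseteq> {1..n}" for k A
  proof -
    have "{i\<in>{1..n}. (indicator A i :: real) \<le> 0} = {1..n} - A" by (auto simp: indicator_def)
    moreover have "card ({1..n} - A) = n - card A"
      using A by (subst card_Diff_subset) (auto intro: finite_subset)
    ultimately show ?thesis using ord_stat_le_iff[of k n "indicator A" 0] k by auto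
  qed
  have ind01: "ord_stat n k (indicator A) = 0 \<or> ord_stat n k (indicator A) = 1"
    if k: "k \<in> {1..n}" for k and A :: "nat set"
  proof -
    obtain i where "ord_stat n k (indicator A) = indicator A i"
      using ord_stat_in[OF k, of "indicator A"] by blast
    then show ?thesis by (cases "i \<in> A") simp_all
  qed
  have thr_iff: "(\<forall>A. A \<subseteq> {1..n} \<longrightarrow> (if \<phi> A then 1 else 0) = ord_stat n k (indicator A))
      \<longleftrightarrow> (\<forall>A. A \<subseteq> {1..n} \<longrightarrow> (\<phi> A \<longleftrightarrow> n - card A < k))" if k: "k \<in> {1..n}" for k
  proof -
    have "((if \<phi> A then 1 else 0) = ord_stat n k (indicator A)) \<longleftrightarrow> (\<phi> A \<longleftrightarrow> n - card A < k)"
      if A: "A \<subseteq> {1..n}" for A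
    proof (cases "\<phi> A")
      case True
      have "(1 = ord_stat n k (indicator A)) \<longleftrightarrow> \<not> ord_stat n k (indicator A) \<le> 0"
        using ind01[OF k, of A] by auto
      also have "\<dots> \<longleftrightarrow> n - card A < k" using ind_le0[OF k A] by linarith
      finally show ?thesis using True by simp
    next
      case False
      have "(0 = ord_stat n k (indicator A)) \<longleftrightarrow> ord_stat n k (indicator A) \<le> 0"
        using ind01[OF k, of A] by auto
      also have "\<dots> \<longleftrightarrow> \<not> n - card A < k" using ind_le0[OF k A] by linarith
      finally show ?thesis using False by simp
    qed
    note eqA = this
    show ?thesis
    proof
      assume L: "\<forall>A. A \<subseteq> {1..n} \<longrightarrow> (if \<phi> A then 1 else 0) = ord_stat n k (indicator A)"
      show "\<forall>A. A \<subseteq> {1..n} \<longrightarrow> (\<phi> A \<longleftrightarrow> n - card A < k)"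
      proof (intro allI impI)
        fix A assume A: "A \<subseteq> {1..n}"
        from eqA[OF A] mp[OF spec[OF L, of A] A] show "\<phi> A \<longleftrightarrow> n - card A < k" by (rule iffD1)
      qed
    next
      assume L: "\<forall>A. A \<subseteq> {1..n} \<longrightarrow> (\<phi> A \<longleftrightarrow> n - card A < k)"
      show "\<forall>A. A \<subseteq> {1..n} \<longrightarrow> (if \<phi> A then 1 else 0) = ord_stat n k (indicator A)"
      proof (intro allI impI)
        fix A assume A: "A \<subseteq> {1..n}"
        from eqA[OF A] mp[OF spec[OF L, of A] A] show "(if \<phi> A then 1 else 0) = ord_stat n k (indicator A)" by (rule iffD2)
      qed
    qed
  qed
  have cardle: "card {i\<in>{1..n}. X i \<omega> \<le> t} = n - card {i\<in>{1..n}. t < X i \<omega>}" for \<omega> t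
  proof -
    have eq: "{i\<in>{1..n}. X i \<omega> \<le> t} = {1..n} - {i\<in>{1..n}. t < X i \<omega>}" by auto
    have "card {i\<in>{1..n}. X i \<omega> \<le> t} = card ({1..n} - {i\<in>{1..n}. t < X i \<omega>})"
      using eq by (rule arg_cong)
    also have "\<dots> = card {1..n} - card {i\<in>{1..n}. t < X i \<omega>}"
      by (rule card_Diff_subset) (rule finite_subset[of _ "{1..n}"], auto)
    also have "\<dots> = n - card {i\<in>{1..n}. t < X i \<omega>}" by simp
    finally show ?thesis .
  qed
  have part2: "entropy_n n (signature M n \<phi> X) = 0"
    if "\<exists>k\<in>{1..n}. \<forall>A. A \<subseteq> {1..n} \<longrightarrow> (if \<phi> A then 1 else 0) = ord_stat n k (indicator A)"
  proof -
    from that have "\<exists>k. k\<in>{1..n} \<and> (\<forall>A. A \<subseteq> {1..n} \<longrightarrow> (if \<phi> A then 1 else 0) = ord_stat n k (indicator A))" by (simp only: Bex_def)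
    then obtain k where kk: "k\<in>{1..n} \<and> (\<forall>A. A \<subseteq> {1..n} \<longrightarrow> (if \<phi> A then 1 else 0) = ord_stat n k (indicator A))" ..
    from kk have k: "k\<in>{1..n}" by (rule conjunct1)
    from kk have th0: "\<forall>A. A \<subseteq> {1..n} \<longrightarrow> (if \<phi> A then 1 else 0) = ord_stat n k (indicator A)" by (rule conjunct2)
    have th: "\<forall>A. A \<subseteq> {1..n} \<longrightarrow> (\<phi> A \<longleftrightarrow> n - card A < k)" using thr_iff[OF k] th0 by (rule iffD1)
    have TO: "T \<omega> = ord_stat n k (\<lambda>i. X i \<omega>)" if ws: "\<omega> \<in> space M" for \<omega>
    proof -
      have o0: "0 \<le> ord_stat n k (\<lambda>i. X i \<omega>)"
      proof (rule ccontr)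
        assume neg: "\<not> 0 \<le> ord_stat n k (\<lambda>i. X i \<omega>)"
        have "{i\<in>{1..n}. X i \<omega> \<le> ord_stat n k (\<lambda>i. X i \<omega>)} = {}"
        proof (rule equals0I)
          fix i assume i: "i \<in> {i\<in>{1..n}. X i \<omega> \<le> ord_stat n k (\<lambda>i. X i \<omega>)}"
          have "0 \<le> X i \<omega>" using i Xnn[OF _ ws] by blast
          then show False using i neg by simp
        qed
        then have c0: "card {i\<in>{1..n}. X i \<omega> \<le> ord_stat n k (\<lambda>i. X i \<omega>)} = 0" by (simp only: card.empty)
        have "k \<le> card {i\<in>{1..n}. X i \<omega> \<le> ord_stat n k (\<lambda>i. X i \<omega>)}"
          using ord_stat_le_iff[of k n "\<lambda>i. X i \<omega>" "ord_stat n k (\<lambda>i. X i \<omega>)"] k by simp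
        moreover have "1 \<le> k" using k by simp
        ultimately show False using c0 by linarith
      qed
      show ?thesis
      proof (rule eq_from_le[OF T0[OF ws] o0])
        fix t :: real assume t: "0 \<le> t"
        have sub: "{i\<in>{1..n}. t < X i \<omega>} \<subseteq> {1..n}" by auto
        have "T \<omega> \<le> t \<longleftrightarrow> \<not> (n - card {i\<in>{1..n}. t < X i \<omega>} < k)"
          using Tc[OF ws t] mp[OF spec[OF th, of "{i\<in>{1..n}. t < X i \<omega>}"] sub] by simp
        also have "\<dots> \<longleftrightarrow> k \<le> card {i\<in>{1..n}. X i \<omega> \<le> t}" using cardle by auto
        also have "\<dots> \<longleftrightarrow> ord_stat n k (\<lambda>i. X i \<omega>) \<le> t" using ord_stat_le_iff[of k n] k by auto
        finally show "T \<omega> \<le> t \<longleftrightarrow> ord_stat n k (\<lambda>i. X i \<omega>) \<le> t" .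
      qed
    qed
    define Pr where "Pr = {p. fst p \<in> {1..n} \<and> snd p \<in> {1..n} \<and> fst p \<noteq> snd p}"
    define N where "N = (\<Union>p\<in>Pr. {\<omega>\<in>space M. X (fst p) \<omega> = X (snd p) \<omega>})"
    have finPr: "finite Pr"
      by (rule finite_subset[of _ "{1..n} \<times> {1..n}"]) (auto simp: Pr_def)
    have pm: "{\<omega>\<in>space M. X (fst p) \<omega> = X (snd p) \<omega>} \<in> sets M" if "p \<in> Pr" for p
    proof -
      have "fst p \<in> {1..n}" "snd p \<in> {1..n}" using that unfolding Pr_def by auto
      note [measurable] = Xm[OF this(1)] Xm[OF this(2)]
      show ?thesis by measurable
    qed
    have Nm: "N \<in> sets M" unfolding N_def using finPr pm by auto
    have "measure M N \<le> (\<Sum>p\<in>Pr. measure M {\<omega>\<in>space M. X (fst p) \<omega> = X (snd p) \<omega>})"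
      unfolding N_def using finPr pm by (intro finite_measure_subadditive_finite) auto
    also have "\<dots> = 0" using ties unfolding Pr_def by (intro sum.neutral) auto
    finally have N0: "measure M N = 0" using measure_nonneg[of M N] by linarith
    have "\<forall>i\<in>{1..n}. measure M (Ok i) = 0 \<or> measure M (Ok i) = 1"
    proof
      fix l assume l: "l\<in>{1..n}"
      show "measure M (Ok l) = 0 \<or> measure M (Ok l) = 1"
      proof (cases "l = k")
        case True
        then have "Ok l = space M" unfolding Ok_def using TO by auto
        then show ?thesis by (simp add: prob_space)
      next
        case False
        have "Ok l \<subseteq> N"
        proof
          fix \<omega> assume w: "\<omega> \<in> Ok l"
          then have ws: "\<omega> \<in> space M" unfolding Ok_def by auto
          have "ord_stat n k (\<lambda>i. X i \<omega>) = ord_stat n l (\<lambda>i. X i \<omega>)" using w TO[OF ws] unfolding Ok_def by auto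
          have kl: "k \<noteq> l" using False by simp
          have "\<not> inj_on (\<lambda>i. X i \<omega>) {1..n}"
          proof
            assume "inj_on (\<lambda>i. X i \<omega>) {1..n}"
            from ord_stat_distinct[OF this k l kl] show False using \<open>ord_stat n k (\<lambda>i. X i \<omega>) = ord_stat n l (\<lambda>i. X i \<omega>)\<close> by simp
          qed
          then obtain a b where "a \<in> {1..n}" "b \<in> {1..n}" "a \<noteq> b" "X a \<omega> = X b \<omega>"
            unfolding inj_on_def by blast
          then show "\<omega> \<in> N" unfolding N_def Pr_def using ws by (intro UN_I[of "(a, b)"]) auto
        qed
        then have "measure M (Ok l) \<le> measure M N" using Nm by (intro finite_measure_mono)
        then show ?thesis using N0 measure_nonneg[of M "Ok l"] by linarith
      qed
    qed
    then show ?thesis using ent_p by simp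
  qed
  have part2': "\<exists>k\<in>{1..n}. \<forall>A. A \<subseteq> {1..n} \<longrightarrow> (if \<phi> A then 1 else 0) = ord_stat n k (indicator A)"
    if h: "entropy_n n (signature M n \<phi> X) = 0"
      and qp: "\<forall>A. A \<subseteq> {1..n} \<longrightarrow> q M n X A > 0"
  proof -
    have b01: "\<forall>i\<in>{1..n}. measure M (Ok i) = 0 \<or> measure M (Ok i) = 1" using h ent_p by simp
    have cov: "space M \<subseteq> (\<Union>k\<in>{1..n}. Ok k)"
    proof
      fix \<omega> assume ws: "\<omega> \<in> space M"
      obtain j where j: "j \<in> {1..n}" "T \<omega> = X j \<omega>" using Tj[OF ws] by blast
      define c where "c = card {i\<in>{1..n}. X i \<omega> \<le> X j \<omega>}"
      have "j \<in> {i\<in>{1..n}. X i \<omega> \<le> X j \<omega>}" using j(1) by simp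
      then have "c > 0" unfolding c_def by (intro card_gt_0_iff[THEN iffD2]) auto
      then have c1: "1 \<le> c" by simp
      have "card {i\<in>{1..n}. X i \<omega> \<le> X j \<omega>} \<le> card {1..n}" by (rule card_mono) auto
      then have cn: "c \<le> n" unfolding c_def by simp
      have c: "c \<in> {1..n}" using c1 cn by auto
      have le: "ord_stat n c (\<lambda>i. X i \<omega>) \<le> X j \<omega>"
        using ord_stat_le_iff[of c n "\<lambda>i. X i \<omega>" "X j \<omega>"] c1 cn unfolding c_def by auto
      obtain l where l: "l \<in> {1..n}" "ord_stat n c (\<lambda>i. X i \<omega>) = X l \<omega>"
        using ord_stat_in[OF c, of "\<lambda>i. X i \<omega>"] by auto
      have "\<not> X l \<omega> < X j \<omega>"
      proof
        assume lt: "X l \<omega> < X j \<omega>"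
        have "c \<le> card {i\<in>{1..n}. X i \<omega> \<le> X l \<omega>}"
          using ord_stat_le_iff[of c n "\<lambda>i. X i \<omega>" "X l \<omega>"] c1 cn l by auto
        moreover have "{i\<in>{1..n}. X i \<omega> \<le> X l \<omega>} \<subset> {i\<in>{1..n}. X i \<omega> \<le> X j \<omega>}"
        proof (rule psubsetI)
          show "{i\<in>{1..n}. X i \<omega> \<le> X l \<omega>} \<subseteq> {i\<in>{1..n}. X i \<omega> \<le> X j \<omega>}" using lt by auto
          have "j \<in> {i\<in>{1..n}. X i \<omega> \<le> X j \<omega>}" "j \<notin> {i\<in>{1..n}. X i \<omega> \<le> X l \<omega>}"
            using lt j(1) by auto
          then show "{i\<in>{1..n}. X i \<omega> \<le> X l \<omega>} \<noteq> {i\<in>{1..n}. X i \<omega> \<le> X j \<omega>}" by blast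
        qed
        then have "card {i\<in>{1..n}. X i \<omega> \<le> X l \<omega>} < c" unfolding c_def
          by (intro psubset_card_mono) auto
        ultimately show False by simp
      qed
      then have "T \<omega> = ord_stat n c (\<lambda>i. X i \<omega>)" using le l j by auto
      then show "\<omega> \<in> (\<Union>k\<in>{1..n}. Ok k)" using c ws unfolding Ok_def by auto
    qed
    obtain k where k: "k\<in>{1..n}" "measure M (Ok k) = 1" using one[OF Omm cov b01] by blast
    have "\<forall>A. A \<subseteq> {1..n} \<longrightarrow> (\<phi> A \<longleftrightarrow> n - card A < k)"
    proof (intro allI impI)
      fix A assume A: "A \<subseteq> {1..n}"
      define R where "R = {1..n} - A"
      have cR: "card R = n - card A" unfolding R_def
        using A by (subst card_Diff_subset) (auto intro: finite_subset)
      have finR: "finite R" unfolding R_def by auto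
      define E where "E = {\<omega>\<in>space M. \<forall>i\<in>{1..n} - A. \<forall>l\<in>A. X i \<omega> < X l \<omega>}"
      have pos: "measure M E > 0" using qp A unfolding q_def E_def by auto
      show "\<phi> A \<longleftrightarrow> n - card A < k"
      proof (rule ccontr)
        assume nq: "\<not> (\<phi> A \<longleftrightarrow> n - card A < k)"
        have "E \<subseteq> space M - Ok k"
        proof
          fix \<omega> assume w: "\<omega> \<in> E"
          then have ws: "\<omega> \<in> space M" unfolding E_def by auto
          have Ew: "\<forall>i\<in>R. \<forall>l\<in>A. X i \<omega> < X l \<omega>" using w unfolding E_def R_def by auto
          have Rne: "R \<noteq> {}"
          proof
            assume "R = {}"
            then have "A = {1..n}" using A unfolding R_def by auto
            then show False using nq e k(1) by auto
          qed
          define v where "v = Max ((\<lambda>i. X i \<omega>) ` R)"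
          have "v \<in> (\<lambda>i. X i \<omega>) ` R" unfolding v_def using Rne finR by (intro Max_in) auto
          then obtain r where r: "r \<in> R" "v = X r \<omega>" by auto
          have v0: "0 \<le> v" using r Xnn ws unfolding R_def by auto
          have Rle: "X i \<omega> \<le> v" if "i \<in> R" for i unfolding v_def using that finR by (intro Max_ge) auto
          have Agt: "v < X l \<omega>" if "l \<in> A" for l using Ew r that by auto
          have setA: "{i\<in>{1..n}. v < X i \<omega>} = A"
          proof (rule set_eqI)
            fix i show "i \<in> {i\<in>{1..n}. v < X i \<omega>} \<longleftrightarrow> i \<in> A"
            proof (cases "i \<in> A")
              case True then show ?thesis using Agt A by auto
            next
              case False
              then have "i \<in> {1..n} \<Longrightarrow> X i \<omega> \<le> v" using Rle unfolding R_def by blast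
              then show ?thesis using False by auto
            qed
          qed
          have setR: "{i\<in>{1..n}. X i \<omega> \<le> v} = R"
          proof (rule set_eqI)
            fix i show "i \<in> {i\<in>{1..n}. X i \<omega> \<le> v} \<longleftrightarrow> i \<in> R"
            proof (cases "i \<in> A")
              case True then show ?thesis using Agt[OF True] unfolding R_def by auto
            next
              case False
              then have "i \<in> {1..n} \<Longrightarrow> X i \<omega> \<le> v" using Rle unfolding R_def by blast
              then show ?thesis using False unfolding R_def by auto
            qed
          qed
          have "T \<omega> \<noteq> ord_stat n k (\<lambda>i. X i \<omega>)"
          proof (cases "\<phi> A")
            case True
            then have kl: "k \<le> card R" using nq cR by auto
            have "ord_stat n k (\<lambda>i. X i \<omega>) \<le> v"
              using ord_stat_le_iff[of k n "\<lambda>i. X i \<omega>" v] k(1) kl setR by auto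
            moreover have "\<not> T \<omega> \<le> v" using Tc[OF ws v0] setA True by simp
            ultimately show ?thesis by auto
          next
            case False
            then have kl: "card R < k" using nq cR by auto
            have "\<not> ord_stat n k (\<lambda>i. X i \<omega>) \<le> v"
              using ord_stat_le_iff[of k n "\<lambda>i. X i \<omega>" v] k(1) kl setR by auto
            moreover have "T \<omega> \<le> v" using Tc[OF ws v0] setA False by simp
            ultimately show ?thesis by auto
          qed
          then show "\<omega> \<in> space M - Ok k" using ws unfolding Ok_def by auto
        qed
        then show False using bad[OF _ Omm[OF k(1)] k(2)] pos by blast
      qed
    qed
    with thr_iff[OF k(1)] have "\<forall>A. A \<subseteq> {1..n} \<longrightarrow> (if \<phi> A then 1 else 0) = ord_stat n k (indicator A)"
      by (rule iffD2)
    then show ?thesis by (rule bexI[OF _ k(1)])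
  qed
  show ?thesis
  proof (intro conjI impI iffI)
  qed (rule part1' part1 part2' part2; assumption)+
qed

end
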